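(* For every set $\mathcal{E}\subseteq\Lambda_s$ of simple terms, the following are equivalent: (1) $\mathcal{E}$ is a maximal clique (with respect to the coherence relation $\frown$) having finite height; (2) there exists a $\lambda$-term $M\in\Lambda$ such that $\mathcal{E}=\mathcal{T}(M)$.
   Context: Call-by-value resource calculus. Resource values $u,v::=x\mid \lambda x.t$; simple terms $s,t::= st\mid [v_1,\dots,v_k]$ ($k\ge0$, bags are finite multisets); resource terms $e::=v\mid s$. $\Lambda_s$ is the set of simple terms, $\Lambda_r$ the set of resource terms. Height: $\mathrm{ht}(x)=0$, $\mathrm{ht}(\lambda x.t)=\mathrm{ht}(t)+1$, $\mathrm{ht}(st)=\max\{\mathrm{ht}(s),\mathrm{ht}(t)\}+1$, $\mathrm{ht}([v_1,\dots,v_k])=\max\{\mathrm{ht}(v_i)\}+1$. The height of a non-empty set of resource terms is the maximal height of its elements if it exists (the set then has finite height), and $\aleph_0$ otherwise. The coherence relation $\frown\subseteq\Lambda_r\times\Lambda_r$ is the smallest relation such that: $x\frown x$; $\lambda x.s\frown\lambda x.t$ whenever $s\frown t$; $[v_1,\dots,v_k]\frown[v_{k+1},\dots,v_n]$ whenever $v_i\frown v_j$ for all $i,j\le n$; $s_1t_1\frown s_2t_2$ whenever $s_1\frown s_2$ and $t_1\frown t_2$. A set $\mathcal{E}\subseteq\Lambda_r$ is a clique if $e\frown e'$ for all $e,e'\in\mathcal{E}$, and a clique is maximal if for every $e\in\Lambda_r$, $\mathcal{E}\cup\{e\}$ being a clique entails $e\in\mathcal{E}$. The (call-by-value) Taylor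 expansion $\mathcal{T}(M)\subseteq\Lambda_s$ of a $\lambda$-term is defined by $\mathcal{T}(x)=\{[x^n]\mid n\ge0\}$ (where $[x^n]$ is the bag with $n$ copies of $x$), $\mathcal{T}(\lambda x.N)=\{[\lambda x.t_1,\dots,\lambda x.t_n]\mid n\ge0,\ t_i\in\mathcal{T}(N)\}$, $\mathcal{T}(PQ)=\{st\mid s\in\mathcal{T}(P),t\in\mathcal{T}(Q)\}$. *)

theory Defs
  imports "HOL-Library.Multiset"
begin

text \<open>Variables are represented by de Bruijn indices, so that syntax is taken
 up to alpha-equivalence, as in the paper.\<close>

datatype lterm = Var nat | Lam lterm | App lterm lterm

datatype rval = RVar nat | RLam rsimp
     and rsimp = RApp rsimp rsimp | RBag "rval multiset"

datatype rterm = V rval | S rsimp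

primrec ht_v :: "rval \<Rightarrow> nat" and ht_s :: "rsimp \<Rightarrow> nat" where
  "ht_v (RVar x) = 0"
| "ht_v (RLam t) = Suc (ht_s t)"
| "ht_s (RApp s t) = Suc (max (ht_s s) (ht_s t))"
| "ht_s (RBag A) = Suc (Max (insert 0 (set_mset (image_mset ht_v A))))"

fun ht :: "rterm \<Rightarrow> nat" where
  "ht (V v) = ht_v v"
| "ht (S s) = ht_s s"

inductive coh :: "rterm \<Rightarrow> rterm \<Rightarrow> bool" where
  coh_var: "coh (V (RVar x)) (V (RVar x))"
| coh_lam: "coh (S s) (S t) \<Longrightarrow> coh (V (RLam s)) (V (RLam t))"
| coh_bag: "(\<forall>u \<in> set_mset (A + B). \<forall>w \<in> set_mset (A + B). coh (V u) (V w))
            \<Longrightarrow> coh (S (RBag A)) (S (RBag B))"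
| coh_app: "coh (S s1) (S s2) \<Longrightarrow> coh (S t1) (S t2)
            \<Longrightarrow> coh (S (RApp s1 t1)) (S (RApp s2 t2))"

definition clique :: "rterm set \<Rightarrow> bool" where
  "clique C \<longleftrightarrow> (\<forall>e \<in> C. \<forall>e' \<in> C. coh e e')"

definition maximal_clique :: "rterm set \<Rightarrow> bool" where
  "maximal_clique C \<longleftrightarrow> clique C \<and> (\<forall>e. clique (insert e C) \<longrightarrow> e \<in> C)"

definition finite_height :: "rterm set \<Rightarrow> bool" where
  "finite_height C \<longleftrightarrow> C \<noteq> {} \<and> (\<exists>n. \<forall>e \<in> C. ht e \<le> n)"

fun taylor :: "lterm \<Rightarrow> rsimp set" where
  "taylor (Var x) = {RBag (replicate_mset n (RVar x)) | n. True}"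
| "taylor (Lam N) = {RBag A | A. \<forall>v \<in># A. \<exists>t \<in> taylor N. v = RLam t}"
| "taylor (App P Q) = {RApp s t | s t. s \<in> taylor P \<and> t \<in> taylor Q}"

end

theory Submission
  imports Defs
begin

inductive_cases cohS_app: "coh (S (RApp s t)) y"
inductive_cases cohS_bag: "coh (S (RBag A)) y"
inductive_cases cohV_var: "coh (V (RVar x)) y"
inductive_cases cohV_lam: "coh (V (RLam t)) y"
inductive_cases coh_V_S: "coh (V v) (S s)"
inductive_cases coh_var_r: "coh y (V (RVar x))"

lemma coh_sym: "coh a b \<Longrightarrow> coh b a"
proof (induction rule: coh.induct)
  case (coh_var x) then show ?case by (rule coh.coh_var)
next
  case (coh_lam s t) then show ?case by (simp add: coh.coh_lam)
next
  case (coh_bag A B) then show ?case by (intro coh.coh_bag) (simp add: ac_simps)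
next
  case (coh_app s1 s2 t1 t2) then show ?case by (simp add: coh.coh_app)
qed

lemma coh_lam_iff: "coh (V (RLam s)) (V (RLam t)) \<longleftrightarrow> coh (S s) (S t)"
  by (auto elim: cohV_lam intro: coh.coh_lam)

lemma coh_app_iff: "coh (S (RApp a b)) (S (RApp c d)) \<longleftrightarrow> coh (S a) (S c) \<and> coh (S b) (S d)"
  by (auto elim: cohS_app intro: coh.coh_app)

lemma coh_bag_iff: "coh (S (RBag A)) (S (RBag B)) \<longleftrightarrow>
   (\<forall>u \<in> set_mset (A + B). \<forall>w \<in> set_mset (A + B). coh (V u) (V w))"
  by (auto elim: cohS_bag intro: coh.coh_bag)

lemma coh_var_iff: "coh (V u) (V (RVar x)) \<longleftrightarrow> u = RVar x"
  by (auto elim: coh_var_r intro: coh.coh_var)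

lemma coh_app_l: "coh (S (RApp a b)) (S y) \<Longrightarrow> \<exists>c d. y = RApp c d"
  by (auto elim: cohS_app)

lemma coh_bag_l: "coh (S (RBag A)) (S y) \<Longrightarrow> \<exists>B. y = RBag B"
  by (auto elim: cohS_bag)

lemma coh_lam_l: "coh (V (RLam t)) (V u) \<Longrightarrow> \<exists>t'. u = RLam t'"
  by (auto elim: cohV_lam)

lemma coh_bag_r: "coh (S s) (S (RBag B)) \<Longrightarrow> \<exists>A. s = RBag A"
  by (drule coh_sym) (auto elim: cohS_bag)

lemma coh_app_r: "coh (S s) (S (RApp c d)) \<Longrightarrow> \<exists>a b. s = RApp a b"
  by (drule coh_sym) (auto elim: cohS_app)

lemma ht_bag_elem: "v \<in># B \<Longrightarrow> ht_v v < ht_s (RBag B)"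
proof -
  assume "v \<in># B"
  then have "ht_v v \<le> Max (insert 0 (set_mset (image_mset ht_v B)))"
    by (intro Max_ge) auto
  then show ?thesis by simp
qed

subsection \<open>Taylor expansions are maximal cliques of finite height\<close>

lemma taylor_ne: "\<exists>s. s \<in> taylor M"
proof (induction M)
  case (Var x) then show ?case by (auto intro!: exI[of _ "RBag {#}"] exI[of _ 0])
next
  case (Lam M) show ?case by (rule exI[of _ "RBag {#}"]) simp
next
  case (App M1 M2) then show ?case by auto
qed

lemma taylor_coh: "s \<in> taylor M \<Longrightarrow> t \<in> taylor M \<Longrightarrow> coh (S s) (S t)"
proof (induction M arbitrary: s t)
  case (Var x)
  then show ?case by (auto intro!: coh.coh_bag coh.coh_var split: if_splits)
next
  case (Lam N)
  from Lam.prems obtain A B where A: "s = RBag A" "\<forall>v \<in># A. \<exists>t \<in> taylor N. v = RLam t"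
    and B: "t = RBag B" "\<forall>v \<in># B. \<exists>t \<in> taylor N. v = RLam t" by auto
  have "\<forall>u \<in> set_mset (A + B). \<forall>w \<in> set_mset (A + B). coh (V u) (V w)"
  proof (intro ballI)
    fix u w assume "u \<in> set_mset (A + B)" "w \<in> set_mset (A + B)"
    have AB: "\<forall>v \<in># A + B. \<exists>t \<in> taylor N. v = RLam t" using A B by auto
    with \<open>u \<in> set_mset (A + B)\<close> \<open>w \<in> set_mset (A + B)\<close>
    obtain t1 t2 where "t1 \<in> taylor N" "t2 \<in> taylor N" "u = RLam t1" "w = RLam t2"
      by blast
    then show "coh (V u) (V w)" using Lam.IH by (auto intro: coh.coh_lam)
  qed
  then show ?case using A B by (auto intro: coh.coh_bag)
next
  case (App P Q)
  then show ?case by (auto intro: coh.coh_app)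
qed

lemma mset_single_val: "\<forall>u \<in># B. u = a \<Longrightarrow> B = replicate_mset (count B a) a"
  by (rule multiset_eqI) (auto simp: count_eq_zero_iff)

lemma taylor_max: "(\<forall>t\<in>taylor M. coh (S s) (S t)) \<Longrightarrow> coh (S s) (S s) \<Longrightarrow> s \<in> taylor M"
proof (induction M arbitrary: s)
  case (Var x)
  have "RBag {#RVar x#} \<in> taylor (Var x)" by (auto intro!: exI[of _ 1])
  with Var.prems have c: "coh (S s) (S (RBag {#RVar x#}))" by auto
  then obtain A where A: "s = RBag A" using coh_bag_r by blast
  have "\<forall>u \<in># A. u = RVar x"
  proof
    fix u assume "u \<in># A"
    with c A have "coh (V u) (V (RVar x))" by (auto simp: coh_bag_iff)
    then show "u = RVar x" by (simp add: coh_var_iff)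
  qed
  then have "A = replicate_mset (count A (RVar x)) (RVar x)" by (rule mset_single_val)
  then show ?case using A by auto
next
  case (Lam N)
  obtain t0 where t0: "t0 \<in> taylor N" using taylor_ne by blast
  have mem: "RBag {#RLam t#} \<in> taylor (Lam N)" if "t \<in> taylor N" for t using that by auto
  from Lam.prems mem[OF t0] have "coh (S s) (S (RBag {#RLam t0#}))" by auto
  then obtain A where A: "s = RBag A" using coh_bag_r by blast
  have "\<forall>v \<in># A. \<exists>t \<in> taylor N. v = RLam t"
  proof
    fix v assume vA: "v \<in># A"
    from Lam.prems mem[OF t0] A have "coh (S (RBag A)) (S (RBag {#RLam t0#}))" by auto
    with vA have "coh (V v) (V (RLam t0))" by (auto simp: coh_bag_iff)
    then obtain t where vt: "v = RLam t" using coh_lam_l[OF coh_sym] by blast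
    have "\<forall>t'\<in>taylor N. coh (S t) (S t')"
    proof
      fix t' assume "t' \<in> taylor N"
      with Lam.prems mem A have "coh (S (RBag A)) (S (RBag {#RLam t'#}))" by auto
      with vA vt show "coh (S t) (S t')" by (auto simp: coh_bag_iff coh_lam_iff)
    qed
    moreover have "coh (S t) (S t)"
    proof -
      have "coh (V v) (V v)" using Lam.prems(2) A vA by (simp add: coh_bag_iff)
      then show ?thesis using vt by (simp add: coh_lam_iff)
    qed
    ultimately have "t \<in> taylor N" using Lam.IH by blast
    with vt show "\<exists>t \<in> taylor N. v = RLam t" by blast
  qed
  with A show ?case by auto
next
  case (App P Q)
  obtain p0 where p0: "p0 \<in> taylor P" using taylor_ne by blast
  obtain q0 where q0: "q0 \<in> taylor Q" using taylor_ne by blast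
  from App.prems p0 q0 have "coh (S s) (S (RApp p0 q0))" by auto
  then obtain a b where ab: "s = RApp a b" using coh_app_r by blast
  have "\<forall>t\<in>taylor P. coh (S a) (S t)"
  proof
    fix t assume "t \<in> taylor P"
    with App.prems q0 ab have "coh (S (RApp a b)) (S (RApp t q0))" by auto
    then show "coh (S a) (S t)" by (simp add: coh_app_iff)
  qed
  moreover have "\<forall>t\<in>taylor Q. coh (S b) (S t)"
  proof
    fix t assume "t \<in> taylor Q"
    with App.prems p0 ab have "coh (S (RApp a b)) (S (RApp p0 t))" by auto
    then show "coh (S b) (S t)" by (simp add: coh_app_iff)
  qed
  moreover have "coh (S a) (S a)" "coh (S b) (S b)" using App.prems(2) ab by (auto simp: coh_app_iff)
  ultimately show ?case using App.IH ab by auto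
qed

fun hb :: "lterm \<Rightarrow> nat" where
  "hb (Var x) = 1"
| "hb (Lam N) = Suc (Suc (hb N))"
| "hb (App P Q) = Suc (max (hb P) (hb Q))"

lemma taylor_ht: "s \<in> taylor M \<Longrightarrow> ht_s s \<le> hb M"
proof (induction M arbitrary: s)
  case (Var x) then show ?case by auto
next
  case (Lam N)
  then obtain A where A: "s = RBag A" "\<forall>v \<in># A. \<exists>t \<in> taylor N. v = RLam t" by auto
  have "\<forall>v \<in># A. ht_v v \<le> Suc (hb N)"
    using A(2) Lam.IH by fastforce
  then have "Max (insert 0 (set_mset (image_mset ht_v A))) \<le> Suc (hb N)"
    by (subst Max_le_iff) auto
  then show ?case using A by simp
next
  case (App P Q) then show ?case by fastforce
qed


subsection \<open>Maximal cliques of finite height are Taylor expansions\<close>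

definition clq :: "rsimp set \<Rightarrow> bool" where
  "clq E \<longleftrightarrow> (\<forall>s\<in>E. \<forall>t\<in>E. coh (S s) (S t))"

definition closd :: "rsimp set \<Rightarrow> bool" where
  "closd E \<longleftrightarrow> (\<forall>s. (\<forall>t\<in>E. coh (S s) (S t)) \<longrightarrow> coh (S s) (S s) \<longrightarrow> s \<in> E)"

lemma main_app:
  assumes IH: "\<And>m E. m < n \<Longrightarrow> E \<noteq> {} \<Longrightarrow> clq E \<Longrightarrow> closd E \<Longrightarrow> (\<forall>s\<in>E. ht_s s \<le> m)
     \<Longrightarrow> \<exists>M. E = taylor M"
  and cl: "clq E" and cd: "closd E" and hE: "\<forall>s\<in>E. ht_s s \<le> n" and e: "RApp s0 t0 \<in> E"
  shows "\<exists>M. E = taylor M"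
proof -
  have allapp: "\<exists>a b. y = RApp a b" if "y \<in> E" for y
    using cl e that unfolding clq_def by (metis coh_app_l)
  define E1 where "E1 = {a. \<exists>b. RApp a b \<in> E}"
  define E2 where "E2 = {b. \<exists>a. RApp a b \<in> E}"
  have c1: "coh (S a) (S a')" if "a \<in> E1" "a' \<in> E1" for a a'
  proof -
    from that obtain b b' where "RApp a b \<in> E" "RApp a' b' \<in> E" unfolding E1_def by auto
    with cl have "coh (S (RApp a b)) (S (RApp a' b'))" unfolding clq_def by blast
    then show ?thesis by (simp add: coh_app_iff)
  qed
  have c2: "coh (S b) (S b')" if "b \<in> E2" "b' \<in> E2" for b b'
  proof -
    from that obtain a a' where "RApp a b \<in> E" "RApp a' b' \<in> E" unfolding E2_def by auto
    with cl have "coh (S (RApp a b)) (S (RApp a' b'))" unfolding clq_def by blast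
    then show ?thesis by (simp add: coh_app_iff)
  qed
  have key: "RApp a b \<in> E" if "a \<in> E1" "b \<in> E2" for a b
  proof -
    have "\<forall>y\<in>E. coh (S (RApp a b)) (S y)"
    proof
      fix y assume "y \<in> E"
      then obtain c d where y: "y = RApp c d" using allapp by blast
      with \<open>y \<in> E\<close> have "c \<in> E1" "d \<in> E2" unfolding E1_def E2_def by auto
      then show "coh (S (RApp a b)) (S y)" using y c1 c2 that by (simp add: coh_app_iff)
    qed
    moreover have "coh (S (RApp a b)) (S (RApp a b))" using c1 c2 that by (simp add: coh_app_iff)
    ultimately show ?thesis using cd unfolding closd_def by blast
  qed
  have s0: "s0 \<in> E1" and t0: "t0 \<in> E2" using e unfolding E1_def E2_def by auto
  have n1: "n \<ge> 1" using hE e by fastforce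
  have h1: "\<forall>a\<in>E1. ht_s a \<le> n - 1" using hE unfolding E1_def by fastforce
  have h2: "\<forall>b\<in>E2. ht_s b \<le> n - 1" using hE unfolding E2_def by fastforce
  have cl1: "clq E1" using c1 unfolding clq_def by blast
  have cl2: "clq E2" using c2 unfolding clq_def by blast
  have cd1: "closd E1" unfolding closd_def
  proof (intro allI impI)
    fix a assume A: "\<forall>t\<in>E1. coh (S a) (S t)" "coh (S a) (S a)"
    have "\<forall>y\<in>E. coh (S (RApp a t0)) (S y)"
    proof
      fix y assume "y \<in> E"
      then obtain c d where y: "y = RApp c d" using allapp by blast
      with \<open>y \<in> E\<close> have "c \<in> E1" "d \<in> E2" unfolding E1_def E2_def by auto
      then show "coh (S (RApp a t0)) (S y)" using y c2 t0 A by (simp add: coh_app_iff)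
    qed
    moreover have "coh (S (RApp a t0)) (S (RApp a t0))" using c2 t0 A by (simp add: coh_app_iff)
    ultimately have "RApp a t0 \<in> E" using cd unfolding closd_def by blast
    then show "a \<in> E1" unfolding E1_def by blast
  qed
  have cd2: "closd E2" unfolding closd_def
  proof (intro allI impI)
    fix b assume B: "\<forall>t\<in>E2. coh (S b) (S t)" "coh (S b) (S b)"
    have "\<forall>y\<in>E. coh (S (RApp s0 b)) (S y)"
    proof
      fix y assume "y \<in> E"
      then obtain c d where y: "y = RApp c d" using allapp by blast
      with \<open>y \<in> E\<close> have "c \<in> E1" "d \<in> E2" unfolding E1_def E2_def by auto
      then show "coh (S (RApp s0 b)) (S y)" using y c1 s0 B by (simp add: coh_app_iff)
    qed
    moreover have "coh (S (RApp s0 b)) (S (RApp s0 b))" using c1 s0 B by (simp add: coh_app_iff)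
    ultimately have "RApp s0 b \<in> E" using cd unfolding closd_def by blast
    then show "b \<in> E2" unfolding E2_def by blast
  qed
  obtain P where P: "E1 = taylor P" using IH[of "n - 1" E1] n1 s0 cl1 cd1 h1 by force
  obtain Q where Q: "E2 = taylor Q" using IH[of "n - 1" E2] n1 t0 cl2 cd2 h2 by force
  have "E = taylor (App P Q)"
  proof
    show "E \<subseteq> taylor (App P Q)"
    proof
      fix y assume "y \<in> E"
      then obtain c d where y: "y = RApp c d" using allapp by blast
      with \<open>y \<in> E\<close> have "c \<in> E1" "d \<in> E2" unfolding E1_def E2_def by auto
      then show "y \<in> taylor (App P Q)" using y P Q by auto
    qed
  next
    show "taylor (App P Q) \<subseteq> E" using key P Q by auto
  qed
  then show ?thesis by blast
qed

lemma main_bag: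
  assumes IH: "\<And>m E. m < n \<Longrightarrow> E \<noteq> {} \<Longrightarrow> clq E \<Longrightarrow> closd E \<Longrightarrow> (\<forall>s\<in>E. ht_s s \<le> m)
     \<Longrightarrow> \<exists>M. E = taylor M"
  and cl: "clq E" and cd: "closd E" and hE: "\<forall>s\<in>E. ht_s s \<le> n" and e: "RBag A0 \<in> E"
  shows "\<exists>M. E = taylor M"
proof -
  have allbag: "\<exists>B. y = RBag B" if "y \<in> E" for y
    using cl e that unfolding clq_def by (metis coh_bag_l)
  define U where "U = (\<Union>{set_mset B | B. RBag B \<in> E})"
  have cU: "coh (V u) (V w)" if "u \<in> U" "w \<in> U" for u w
  proof -
    from that obtain B B' where "RBag B \<in> E" "RBag B' \<in> E" "u \<in># B" "w \<in># B'"
      unfolding U_def by blast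
    moreover from this have "coh (S (RBag B)) (S (RBag B'))" using cl unfolding clq_def by blast
    ultimately show ?thesis by (simp add: coh_bag_iff)
  qed
  have inE: "RBag B \<in> E" if "set_mset B \<subseteq> U" for B
  proof -
    have "\<forall>y\<in>E. coh (S (RBag B)) (S y)"
    proof
      fix y assume "y \<in> E"
      then obtain B' where y: "y = RBag B'" using allbag by blast
      with \<open>y \<in> E\<close> have "set_mset B' \<subseteq> U" unfolding U_def by blast
      then show "coh (S (RBag B)) (S y)" using y that by (simp add: coh_bag_iff) (blast intro: cU)
    qed
    moreover have "coh (S (RBag B)) (S (RBag B))" using that cU by (auto simp: coh_bag_iff)
    ultimately show ?thesis using cd unfolding closd_def by blast
  qed
  have "U \<noteq> {}"
  proof
    assume U0: "U = {}"
    then have "set_mset {#RVar 0#} \<subseteq> U \<or> True" by simp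
    have "\<forall>y\<in>E. coh (S (RBag {#RVar 0#})) (S y)"
    proof
      fix y assume "y \<in> E"
      then obtain B' where y: "y = RBag B'" using allbag by blast
      with \<open>y \<in> E\<close> U0 have "B' = {#}" unfolding U_def by blast
      then show "coh (S (RBag {#RVar 0#})) (S y)" using y by (auto simp: coh_bag_iff intro: coh.coh_var)
    qed
    moreover have "coh (S (RBag {#RVar 0#})) (S (RBag {#RVar 0#}))"
      by (auto simp: coh_bag_iff intro: coh.coh_var)
    ultimately have "RBag {#RVar 0#} \<in> E" using cd unfolding closd_def by blast
    then have "RVar 0 \<in> U" unfolding U_def by auto
    with U0 show False by simp
  qed
  then obtain u0 where u0: "u0 \<in> U" by blast
  have Usub: "y \<in> E \<Longrightarrow> y = RBag B \<Longrightarrow> set_mset B \<subseteq> U" for y B unfolding U_def by blast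
  show ?thesis
  proof (cases u0)
    case (RVar x)
    have Ux: "u = RVar x" if "u \<in> U" for u using cU[OF that u0] RVar by (simp add: coh_var_iff)
    have "E = taylor (Var x)"
    proof
      show "E \<subseteq> taylor (Var x)"
      proof
        fix y assume "y \<in> E"
        then obtain B where y: "y = RBag B" using allbag by blast
        with \<open>y \<in> E\<close> have "\<forall>u \<in># B. u = RVar x" using Usub Ux by blast
        then have "B = replicate_mset (count B (RVar x)) (RVar x)" by (rule mset_single_val)
        then show "y \<in> taylor (Var x)" using y by auto
      qed
    next
      show "taylor (Var x) \<subseteq> E"
      proof
        fix y assume "y \<in> taylor (Var x)"
        then obtain k where y: "y = RBag (replicate_mset k (RVar x))" by auto
        have "set_mset (replicate_mset k (RVar x)) \<subseteq> U" using u0 RVar by auto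
        then show "y \<in> E" using y inE by auto
      qed
    qed
    then show ?thesis by blast
  next
    case (RLam t0)
    have Ul: "\<exists>t. u = RLam t" if "u \<in> U" for u using cU[OF u0 that] RLam coh_lam_l by blast
    define F where "F = {t. RLam t \<in> U}"
    have t0: "t0 \<in> F" using u0 RLam F_def by simp
    have clF: "clq F" unfolding clq_def F_def using cU by (auto simp: coh_lam_iff[symmetric])
    have cdF: "closd F" unfolding closd_def
    proof (intro allI impI)
      fix t assume T: "\<forall>t'\<in>F. coh (S t) (S t')" "coh (S t) (S t)"
      have "\<forall>y\<in>E. coh (S (RBag {#RLam t#})) (S y)"
      proof
        fix y assume "y \<in> E"
        then obtain B' where y: "y = RBag B'" using allbag by blast
        with \<open>y \<in> E\<close> have BU: "set_mset B' \<subseteq> U" using Usub by blast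
        show "coh (S (RBag {#RLam t#})) (S y)" unfolding y coh_bag_iff
        proof (intro ballI)
          fix u w assume uw: "u \<in> set_mset ({#RLam t#} + B')" "w \<in> set_mset ({#RLam t#} + B')"
          have mem: "v = RLam t \<or> (\<exists>t'. v = RLam t' \<and> t' \<in> F)" if "v \<in> set_mset ({#RLam t#} + B')" for v
            using that BU Ul unfolding F_def by fastforce
          have sym: "coh (S t') (S t)" if "t' \<in> F" for t'
            using T(1) that by (blast intro: coh_sym)
          from mem[OF uw(1)] mem[OF uw(2)] show "coh (V u) (V w)"
          proof (elim disjE exE conjE)
            assume "u = RLam t" "w = RLam t" then show ?thesis using T(2) by (simp add: coh_lam_iff)
          next
            fix t2 assume "u = RLam t" "w = RLam t2" "t2 \<in> F"
            then show ?thesis using T(1) by (simp add: coh_lam_iff)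
          next
            fix t1 assume "u = RLam t1" "t1 \<in> F" "w = RLam t"
            then show ?thesis using sym by (simp add: coh_lam_iff)
          next
            fix t1 t2 assume "u = RLam t1" "t1 \<in> F" "w = RLam t2" "t2 \<in> F"
            then show ?thesis using cU unfolding F_def by simp
          qed
        qed
      qed
      moreover have "coh (S (RBag {#RLam t#})) (S (RBag {#RLam t#}))"
        using T by (auto simp: coh_bag_iff coh_lam_iff)
      ultimately have "RBag {#RLam t#} \<in> E" using cd unfolding closd_def by blast
      then show "t \<in> F" unfolding F_def U_def by auto
    qed
    have hF: "\<forall>t\<in>F. ht_s t \<le> n - 2"
    proof
      fix t assume "t \<in> F"
      then obtain B where BE: "RBag B \<in> E" and tB: "RLam t \<in># B" unfolding F_def U_def by auto
      have "ht_v (RLam t) < ht_s (RBag B)" by (rule ht_bag_elem[OF tB])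
      moreover have "ht_s (RBag B) \<le> n" using hE BE by blast
      ultimately show "ht_s t \<le> n - 2" by (simp del: ht_s.simps)
    qed
    have n2: "n \<ge> 2"
    proof -
      obtain B where BE: "RBag B \<in> E" and tB: "RLam t0 \<in># B" using t0 unfolding F_def U_def by auto
      have "ht_v (RLam t0) < ht_s (RBag B)" by (rule ht_bag_elem[OF tB])
      moreover have "ht_s (RBag B) \<le> n" using hE BE by blast
      ultimately show ?thesis by (simp del: ht_s.simps)
    qed
    obtain N where N: "F = taylor N" using IH[of "n - 2" F] n2 t0 clF cdF hF by force
    have "E = taylor (Lam N)"
    proof
      show "E \<subseteq> taylor (Lam N)"
      proof
        fix y assume "y \<in> E"
        then obtain B where y: "y = RBag B" using allbag by blast
        with \<open>y \<in> E\<close> have "set_mset B \<subseteq> U" using Usub by blast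
        then have "\<forall>v \<in># B. \<exists>t \<in> taylor N. v = RLam t" using Ul N unfolding F_def by fastforce
        then show "y \<in> taylor (Lam N)" using y by auto
      qed
    next
      show "taylor (Lam N) \<subseteq> E"
      proof
        fix y assume "y \<in> taylor (Lam N)"
        then obtain B where y: "y = RBag B" and B: "\<forall>v \<in># B. \<exists>t \<in> taylor N. v = RLam t" by auto
        have "set_mset B \<subseteq> U" using B N unfolding F_def by auto
        then show "y \<in> E" using y inE by auto
      qed
    qed
    then show ?thesis by blast
  qed
qed

lemma main: "E \<noteq> {} \<Longrightarrow> clq E \<Longrightarrow> closd E \<Longrightarrow> (\<forall>s\<in>E. ht_s s \<le> n) \<Longrightarrow> \<exists>M. E = taylor M"
proof (induction n arbitrary: E rule: less_induct)
  case (less n)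
  from less.prems(1) obtain e where e: "e \<in> E" by blast
  show ?case
  proof (cases e)
    case (RApp s t)
    show ?thesis by (rule main_app[OF less.IH less.prems(2-4)]) (use e RApp in auto)
  next
    case (RBag A)
    show ?thesis by (rule main_bag[OF less.IH less.prems(2-4)]) (use e RBag in auto)
  qed
qed

theorem proposition3p18:
  fixes E :: "rsimp set"
  shows "(maximal_clique (S ` E) \<and> finite_height (S ` E)) \<longleftrightarrow> (\<exists>M. E = taylor M)"
proof
  assume H: "maximal_clique (S ` E) \<and> finite_height (S ` E)"
  then obtain n where n: "\<forall>s\<in>E. ht_s s \<le> n" and ne: "E \<noteq> {}"
    unfolding finite_height_def by auto
  have cl: "clq E" using H unfolding maximal_clique_def clique_def clq_def by auto
  have cd: "closd E" unfolding closd_def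
  proof (intro allI impI)
    fix s assume A: "\<forall>t\<in>E. coh (S s) (S t)" "coh (S s) (S s)"
    have "clique (insert (S s) (S ` E))"
    proof -
      have "coh (S t) (S s)" if "t \<in> E" for t using A(1) that coh_sym by blast
      then show ?thesis using A cl unfolding clique_def clq_def by blast
    qed
    then have "S s \<in> S ` E" using H unfolding maximal_clique_def by blast
    then show "s \<in> E" by auto
  qed
  show "\<exists>M. E = taylor M" by (rule main[OF ne cl cd n])
next
  assume "\<exists>M. E = taylor M"
  then obtain M where E: "E = taylor M" by blast
  obtain s0 where s0: "s0 \<in> E" using taylor_ne E by blast
  have cq: "clique (S ` E)" unfolding clique_def E using taylor_coh by blast
  have mx: "e \<in> S ` E" if "clique (insert e (S ` E))" for e
  proof -
    have c0: "coh e (S s0)" using that s0 unfolding clique_def by blast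
    then obtain s where s: "e = S s" by (cases e) (auto elim: coh_V_S)
    have "\<forall>t\<in>taylor M. coh (S s) (S t)" "coh (S s) (S s)"
      using that s E unfolding clique_def by auto
    then have "s \<in> E" using taylor_max E by blast
    then show ?thesis using s by blast
  qed
  have fh: "finite_height (S ` E)" unfolding finite_height_def
    using s0 taylor_ht E by (intro conjI exI[of _ "hb M"]) auto
  show "maximal_clique (S ` E) \<and> finite_height (S ` E)"
    using cq mx fh unfolding maximal_clique_def by blast
qed

end
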